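(* Let $A,B$ be finite-dimensional systems, $\{|j\rangle\}_{j=0}^{|A|-1}$ an orthonormal basis of $A$, and $U_0,\dots,U_{|A|-1}$ unitary operators on $B$. Let $\mathcal C_U\in\mathrm{Ch}(AB,AB)$ be the controlled-unitary channel $\mathcal C_U(X)=C_UXC_U^\dagger$ with $C_U=\sum_j|j\rangle\langle j|_A\otimes U_j$. Then \[ S^\downarrow_\infty(R_AA|R_BB)_{\Phi^{\mathcal C_U}}=-\log\dim\mathrm{span}\{|U_j\rangle\!\rangle\}_j, \] where $|U\rangle\!\rangle:=\sum_i(\mathbb 1_{R_B}\otimes U)|ii\rangle_{R_BB}$ is the vectorization of $U$.
   Context: $\log$ base 2. Maximally entangled state $\Phi_{RX}:=\frac1{|X|}\sum_{i,j}|ii\rangle\langle jj|$; Choi state of a channel $\mathcal N$ from $A'B'$ to $AB$ (here $A'=A$, $B'=B$): $\Phi^{\mathcal N}_{R_AAR_BB}:=(\mathrm{id}_{R_AR_B}\otimes\mathcal N)(\Phi_{R_AA'}\otimes\Phi_{R_BB'})$, $R_A\simeq A'$, $R_B\simeq B'$. $D_\infty(\rho\|\sigma):=\log\inf\{\lambda\ge0:\rho\le\lambda\sigma\}$ and for a state $\rho_{XY}$, $S^\downarrow_\infty(X|Y)_\rho:=-D_\infty(\rho_{XY}\|\mathbb 1_X\otimes\rho_Y)$. *)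

theory Defs
  imports Complex_Main "HOL-Library.Function_Algebras"
begin

text \<open>Finite-dimensional quantum systems are modelled by finite index types:
 a system with orthonormal computational basis indexed by the finite type 'i
 has Hilbert space 'i => complex, and operators are matrices 'i => 'i => complex.\<close>

type_synonym 'i qop = "'i \<Rightarrow> 'i \<Rightarrow> complex"

definition idop :: "'i qop" where
  "idop = (\<lambda>x y. if x = y then 1 else 0)"

definition mmult :: "('i::finite) qop \<Rightarrow> 'i qop \<Rightarrow> 'i qop" where
  "mmult M N = (\<lambda>x y. \<Sum>z\<in>UNIV. M x z * N z y)"

definition adj :: "'i qop \<Rightarrow> 'i qop" where
  "adj M = (\<lambda>x y. cnj (M y x))"

definition unitary_op :: "('i::finite) qop \<Rightarrow> bool" where
  "unitary_op U \<longleftrightarrow> mmult (adj U) U = idop \<and> mmult U (adj U) = idop"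

definition psd :: "('i::finite) qop \<Rightarrow> bool" where
  "psd M \<longleftrightarrow> (\<forall>v :: 'i \<Rightarrow> complex.
      let q = (\<Sum>x\<in>UNIV. \<Sum>y\<in>UNIV. cnj (v x) * M x y * v y) in Im q = 0 \<and> 0 \<le> Re q)"

definition op_le :: "('i::finite) qop \<Rightarrow> 'i qop \<Rightarrow> bool" where
  "op_le \<rho> \<sigma> \<longleftrightarrow> psd (\<lambda>x y. \<sigma> x y - \<rho> x y)"

definition tensor :: "'x qop \<Rightarrow> 'y qop \<Rightarrow> ('x \<times> 'y) qop" where
  "tensor M N = (\<lambda>(x1, y1) (x2, y2). M x1 x2 * N y1 y2)"

definition ptrace1 :: "(('x::finite) \<times> 'y) qop \<Rightarrow> 'y qop" where
  "ptrace1 \<rho> = (\<lambda>y y'. \<Sum>x\<in>UNIV. \<rho> (x, y) (x, y'))"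

definition Dmax :: "('i::finite) qop \<Rightarrow> 'i qop \<Rightarrow> real" where
  "Dmax \<rho> \<sigma> = log 2 (Inf {l :: real. 0 \<le> l \<and> op_le \<rho> (\<lambda>x y. complex_of_real l * \<sigma> x y)})"

definition Sdown_inf :: "(('x::finite) \<times> ('y::finite)) qop \<Rightarrow> real" where
  "Sdown_inf \<rho> = - Dmax \<rho> (tensor idop (ptrace1 \<rho>))"

definition maxent :: "(('a::finite) \<times> 'a) qop" where
  "maxent = (\<lambda>(r, x) (r', x'). if r = x \<and> r' = x' then 1 / of_nat (card (UNIV :: 'a set)) else 0)"

text \<open>Choi state of a (linear) map N on operators of AB, as an operator on
 (R_A A)(R_B B), i.e. (id_{R_A R_B} tensor N)(Phi_{R_A A} tensor Phi_{R_B B}).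
 For a linear N, id tensor N acts blockwise: the (r,r') block is mapped by N.\<close>
definition choi :: "(('a::finite \<times> 'b::finite) qop \<Rightarrow> ('a \<times> 'b) qop)
                   \<Rightarrow> (('a \<times> 'a) \<times> ('b \<times> 'b)) qop" where
  "choi N = (\<lambda>((ra, a), (rb, b)) ((ra', a'), (rb', b')).
      N (\<lambda>(a1, b1) (a2, b2). maxent (ra, a1) (ra', a2) * maxent (rb, b1) (rb', b2))
        (a, b) (a', b'))"

definition ctrl_unitary :: "('a::finite \<Rightarrow> 'a \<Rightarrow> complex) \<Rightarrow> ('a \<Rightarrow> ('b::finite) qop) \<Rightarrow> ('a \<times> 'b) qop" where
  "ctrl_unitary e U = (\<lambda>(a, b) (a', b'). \<Sum>j\<in>UNIV. e j a * cnj (e j a') * U j b b')"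

definition conj_channel :: "('i::finite) qop \<Rightarrow> ('i qop \<Rightarrow> 'i qop)" where
  "conj_channel C = (\<lambda>X. mmult (mmult C X) (adj C))"

text \<open>Vectorization |U>> = sum_i (1_{R_B} tensor U)|ii>, a vector on R_B B:
 its (r, b) entry is U b r.\<close>
definition vecop :: "'b qop \<Rightarrow> ('b \<times> 'b \<Rightarrow> complex)" where
  "vecop U = (\<lambda>(r, b). U b r)"

definition cscale :: "complex \<Rightarrow> ('i \<Rightarrow> complex) \<Rightarrow> ('i \<Rightarrow> complex)" where
  "cscale c v = (\<lambda>x. c * v x)"

definition orthonormal_basis :: "('a::finite \<Rightarrow> 'a \<Rightarrow> complex) \<Rightarrow> bool" where
  "orthonormal_basis e \<longleftrightarrow>
     (\<forall>j k. (\<Sum>a\<in>UNIV. cnj (e j a) * e k a) = (if j = k then 1 else 0))"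

end

theory Submission
  imports Defs "HOL-Analysis.L2_Norm"
begin


interpretation cv: vector_space "cscale :: complex \<Rightarrow> ('i \<Rightarrow> complex) \<Rightarrow> ('i \<Rightarrow> complex)"
  by unfold_locales (auto simp: cscale_def fun_eq_iff algebra_simps)

lemma cscale_apply: "cscale c v x = c * v x" by (simp add: cscale_def)

lemma sum_fun_apply: "(\<Sum>p\<in>A. f p) x = (\<Sum>p\<in>A. f p x)" for f :: "'a \<Rightarrow> 'i \<Rightarrow> complex"
  by (induction A rule: infinite_finite_induct) auto

definition ip :: "('i::finite \<Rightarrow> complex) \<Rightarrow> ('i \<Rightarrow> complex) \<Rightarrow> complex" where
  "ip u v = (\<Sum>i\<in>UNIV. cnj (u i) * v i)"

definition orthonormal :: "('i::finite \<Rightarrow> complex) set \<Rightarrow> bool" where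
  "orthonormal P \<longleftrightarrow> (\<forall>p\<in>P. ip p p = 1) \<and> (\<forall>p\<in>P. \<forall>q\<in>P. p \<noteq> q \<longrightarrow> ip p q = 0)"

definition proj :: "('i::finite \<Rightarrow> complex) set \<Rightarrow> ('i \<Rightarrow> complex) \<Rightarrow> ('i \<Rightarrow> complex)" where
  "proj P w = (\<Sum>p\<in>P. cscale (ip p w) p)"

lemma proj_apply: "proj P w x = (\<Sum>p\<in>P. ip p w * p x)"
  by (simp add: proj_def sum_fun_apply cscale_apply)

lemma ip_add_right: "ip u (v + w) = ip u v + ip u w"
  by (simp add: ip_def algebra_simps sum.distrib)
lemma ip_diff_right: "ip u (v - w) = ip u v - ip u w"
  by (simp add: ip_def algebra_simps sum_subtractf)
lemma ip_add_left: "ip (u + w) v = ip u v + ip w v"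
  by (simp add: ip_def algebra_simps sum.distrib)
lemma ip_scale_right: "ip u (cscale c v) = c * ip u v"
  by (simp add: ip_def sum_distrib_left algebra_simps cscale_apply)
lemma ip_scale_left: "ip (cscale c u) v = cnj c * ip u v"
  by (simp add: ip_def sum_distrib_left algebra_simps cscale_apply)
lemma ip_zero_right[simp]: "ip u 0 = 0" by (simp add: ip_def)
lemma ip_zero_left[simp]: "ip 0 u = 0" by (simp add: ip_def)
lemma ip_sum_right: "ip u (\<Sum>p\<in>A. f p) = (\<Sum>p\<in>A. ip u (f p))"
  unfolding ip_def sum_fun_apply sum_distrib_left by (rule sum.swap)
lemma ip_cnj: "ip v u = cnj (ip u v)"
  by (simp add: ip_def mult.commute)
lemma ip_self: "ip u u = of_real (\<Sum>i\<in>UNIV. (cmod (u i))^2)"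
  unfolding ip_def of_real_sum by (intro sum.cong refl) (metis complex_norm_square mult.commute)

lemma ip_proj:
  assumes "finite P" "orthonormal P" "q \<in> P"
  shows "ip q (proj P w) = ip q w"
proof -
  have "ip q (proj P w) = (\<Sum>p\<in>P. ip p w * ip q p)"
    by (simp add: proj_def ip_sum_right ip_scale_right)
  also have "\<dots> = (\<Sum>p\<in>P. if p = q then ip q w else 0)"
    using assms by (intro sum.cong) (auto simp: orthonormal_def)
  also have "\<dots> = ip q w" using assms by simp
  finally show ?thesis .
qed

lemma proj_in_span: "proj P w \<in> cv.span P"
  unfolding proj_def by (intro cv.span_sum cv.span_scale cv.span_base)

lemma ip_span_orth:
  assumes "c \<in> cv.span S" "\<forall>s\<in>S. ip s u = 0"
  shows "ip c u = 0"
  using assms(1)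
proof (induction rule: cv.span_induct)
  case base
  show ?case unfolding cv.subspace_def by (auto simp: ip_add_left ip_scale_left)
next
  case (step x) then show ?case using assms(2) by auto
qed

lemma ip_span_proj:
  assumes "finite P" "orthonormal P" "c \<in> cv.span P"
  shows "ip c w = ip c (proj P w)"
proof -
  have "ip c (w - proj P w) = 0"
    using assms by (intro ip_span_orth[of c P]) (auto simp: ip_diff_right ip_proj)
  then show ?thesis by (simp add: ip_diff_right)
qed

lemma parseval_fam:
  assumes "finite I" "\<forall>i\<in>I. \<forall>k\<in>I. ip (f i) (f k) = (if i = k then 1 else 0)"
  shows "ip (\<lambda>x. \<Sum>i\<in>I. a i * f i x) (\<lambda>x. \<Sum>k\<in>I. b k * f k x) = (\<Sum>i\<in>I. cnj (a i) * b i)"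
proof -
  have "ip (\<lambda>x. \<Sum>i\<in>I. a i * f i x) (\<lambda>x. \<Sum>k\<in>I. b k * f k x)
      = (\<Sum>x\<in>UNIV. \<Sum>i\<in>I. \<Sum>k\<in>I. cnj (a i) * b k * (cnj (f i x) * f k x))"
    by (simp add: ip_def sum_distrib_left sum_distrib_right algebra_simps)
  also have "\<dots> = (\<Sum>i\<in>I. \<Sum>k\<in>I. cnj (a i) * b k * ip (f i) (f k))"
    by (simp add: ip_def sum_distrib_left sum.swap[of _ UNIV])
  also have "\<dots> = (\<Sum>i\<in>I. \<Sum>k\<in>I. if k = i then cnj (a i) * b i else 0)"
    using assms(2) by (intro sum.cong) auto
  also have "\<dots> = (\<Sum>i\<in>I. cnj (a i) * b i)"
    using assms(1) by simp
  finally show ?thesis .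
qed

lemma orthonormal_independent:
  assumes "orthonormal P"
  shows "cv.independent P"
  unfolding cv.independent_explicit_module
proof (intro allI impI)
  fix t u v assume t: "finite t" "t \<subseteq> P" "(\<Sum>v\<in>t. cscale (u v) v) = 0" "v \<in> t"
  have "0 = ip v (\<Sum>w\<in>t. cscale (u w) w)" using t by simp
  also have "\<dots> = (\<Sum>w\<in>t. u w * ip v w)" by (simp add: ip_sum_right ip_scale_right)
  also have "\<dots> = (\<Sum>w\<in>t. if w = v then u v else 0)"
    using t assms by (intro sum.cong) (auto simp: orthonormal_def subset_iff cscale_apply)
  also have "\<dots> = u v" using t by simp
  finally show "u v = 0" by simp
qed

lemma span_insert_cong:
  assumes "cv.span A = cv.span B"
  shows "cv.span (insert x A) = cv.span (insert x B)"
  by (simp add: cv.span_insert assms)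

lemma gram_schmidt:
  fixes F :: "('i::finite \<Rightarrow> complex) set"
  assumes "finite F"
  shows "\<exists>P. finite P \<and> orthonormal P \<and> cv.span P = cv.span F"
  using assms
proof (induction F rule: finite_induct)
  case empty
  show ?case by (intro exI[of _ "{}"]) (auto simp: orthonormal_def)
next
  case (insert f F)
  then obtain P where P: "finite P" "orthonormal P" "cv.span P = cv.span F" by blast
  have sp: "cv.span (insert f P) = cv.span (insert f F)"
    by (rule span_insert_cong) (use P in simp)
  define r where "r = f - proj P f"
  have orth_r: "ip p r = 0" if "p \<in> P" for p
    using P that by (simp add: r_def ip_diff_right ip_proj)
  show ?case
  proof (cases "r = 0")
    case True
    then have "f \<in> cv.span P" using proj_in_span[of P f] by (simp add: r_def)
    then have "cv.span (insert f P) = cv.span P" by (rule cv.span_redundant)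
    then have "cv.span P = cv.span (insert f F)" using sp by simp
    with P show ?thesis by blast
  next
    case False
    define t where "t = (\<Sum>i\<in>UNIV. (cmod (r i))^2)"
    have rr: "ip r r = of_real t" by (simp add: t_def ip_self)
    obtain i where "r i \<noteq> 0" using False by (auto simp: fun_eq_iff)
    then have "0 < (cmod (r i))^2" by simp
    also have "\<dots> \<le> t" unfolding t_def
      by (rule member_le_sum) auto
    finally have tpos: "0 < t" .
    define q where "q = cscale (complex_of_real (1 / sqrt t)) r"
    have "ip q q = complex_of_real (1 / sqrt t) * complex_of_real (1 / sqrt t) * complex_of_real t"
      by (simp add: q_def ip_scale_left ip_scale_right rr)
    also have "\<dots> = complex_of_real ((1 / sqrt t) * (1 / sqrt t) * t)" by (simp only: of_real_mult)
    also have "(1 / sqrt t) * (1 / sqrt t) * t = 1"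
      using tpos by (simp add: field_simps)
    finally have qq: "ip q q = 1" by simp
    have pq: "ip p q = 0" if "p \<in> P" for p
      using orth_r[OF that] by (simp add: q_def ip_scale_right)
    have qp: "ip q p = 0" if "p \<in> P" for p
      using pq[OF that] ip_cnj[of q p] by simp
    have on: "orthonormal (insert q P)"
      using P(2) qq pq qp unfolding orthonormal_def by auto
    have fq: "f = cscale (complex_of_real (sqrt t)) q + proj P f"
      using tpos by (simp add: q_def r_def fun_eq_iff)
    have "cv.span (insert q P) = cv.span (insert f P)"
    proof (subst cv.span_eq, intro conjI)
      show "insert q P \<subseteq> cv.span (insert f P)"
      proof -
        have "q \<in> cv.span (insert f P)"
          unfolding q_def r_def
          by (intro cv.span_scale cv.span_diff cv.span_base[of f]
                    subsetD[OF cv.span_mono[of P "insert f P"]] proj_in_span) auto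
        then show ?thesis by (auto intro: cv.span_base)
      qed
      show "insert f P \<subseteq> cv.span (insert q P)"
      proof -
        have "f \<in> cv.span (insert q P)"
          by (subst fq, intro cv.span_add cv.span_scale cv.span_base[of q]
                    subsetD[OF cv.span_mono[of P "insert q P"]] proj_in_span) auto
        then show ?thesis by (auto intro: cv.span_base)
      qed
    qed
    then show ?thesis using P on sp by (intro exI[of _ "insert q P"]) auto
  qed
qed

lemma dim_orthonormal:
  assumes "orthonormal P" "cv.span P = cv.span F"
  shows "cv.dim F = card P"
proof -
  have "cv.dim F = cv.dim (cv.span P)" using assms(2) by simp
  also have "\<dots> = card P" by (rule cv.dim_span_eq_card_independent[OF orthonormal_independent[OF assms(1)]])
  finally show ?thesis .
qed

lemma rank_le:
  fixes L :: "'n::finite \<Rightarrow> 'm::finite \<Rightarrow> complex"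
  shows "cv.dim (range (\<lambda>m n. L n m)) \<le> cv.dim (range (\<lambda>n m. cnj (L n m)))"
proof -
  obtain P where P: "finite P" "orthonormal P" "cv.span P = cv.span (range (\<lambda>n m. cnj (L n m)))"
    using gram_schmidt[of "range (\<lambda>n m. cnj (L n m))"] by auto
  have cardP: "cv.dim (range (\<lambda>n m. cnj (L n m))) = card P"
    using dim_orthonormal[OF P(2,3)] .
  define Lm where "Lm p = (\<lambda>n. \<Sum>m\<in>UNIV. L n m * p m)" for p :: "'m \<Rightarrow> complex"
  have sub: "range (\<lambda>m n. L n m) \<subseteq> cv.span (Lm ` P)"
  proof clarify
    fix m0
    define \<delta> where "\<delta> = (\<lambda>m::'m. if m = m0 then (1::complex) else 0)"
    have acol: "(\<lambda>m. cnj (L n m)) \<in> cv.span P" for n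
      using P(3) by (auto intro: cv.span_base)
    have "(\<lambda>n. L n m0) = Lm (proj P \<delta>)"
    proof
      fix n
      have "L n m0 = ip (\<lambda>m. cnj (L n m)) \<delta>" by (simp add: ip_def \<delta>_def if_distrib cong: if_cong)
      also have "\<dots> = ip (\<lambda>m. cnj (L n m)) (proj P \<delta>)"
        by (rule ip_span_proj[OF P(1,2) acol])
      also have "\<dots> = Lm (proj P \<delta>) n" by (simp add: ip_def Lm_def)
      finally show "L n m0 = Lm (proj P \<delta>) n" .
    qed
    also have "\<dots> = (\<Sum>p\<in>P. cscale (ip p \<delta>) (Lm p))"
    proof
      fix n
      have "Lm (proj P \<delta>) n = (\<Sum>m\<in>UNIV. \<Sum>p\<in>P. L n m * (ip p \<delta> * p m))"
        by (simp add: Lm_def proj_apply sum_distrib_left)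
      also have "\<dots> = (\<Sum>p\<in>P. ip p \<delta> * (\<Sum>m\<in>UNIV. L n m * p m))"
        by (subst sum.swap) (simp add: sum_distrib_left algebra_simps)
      also have "\<dots> = (\<Sum>p\<in>P. cscale (ip p \<delta>) (Lm p)) n"
        by (simp add: sum_fun_apply cscale_apply Lm_def)
      finally show "Lm (proj P \<delta>) n = (\<Sum>p\<in>P. cscale (ip p \<delta>) (Lm p)) n" .
    qed
    also have "\<dots> \<in> cv.span (Lm ` P)"
      by (intro cv.span_sum cv.span_scale cv.span_base) auto
    finally show "(\<lambda>n. L n m0) \<in> cv.span (Lm ` P)" .
  qed
  have "cv.dim (range (\<lambda>m n. L n m)) \<le> card (Lm ` P)"
    by (rule cv.dim_le_card[OF sub]) (use P in auto)
  also have "\<dots> \<le> card P" using P(1) by (rule card_image_le)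
  finally show ?thesis using cardP by simp
qed

lemma rank_eq:
  fixes L :: "'n::finite \<Rightarrow> 'm::finite \<Rightarrow> complex"
  shows "cv.dim (range (\<lambda>m n. L n m)) = cv.dim (range (\<lambda>n m. cnj (L n m)))"
  using rank_le[of L] rank_le[of "\<lambda>m n. cnj (L n m)"] by simp



lemma sum_pair: "(\<Sum>X\<in>UNIV. f X) = (\<Sum>x\<in>UNIV. \<Sum>y\<in>UNIV. f (x, y))"
  for f :: "('x::finite \<times> 'y::finite) \<Rightarrow> 'c::comm_monoid_add"
  by (simp add: sum.cartesian_product UNIV_Times_UNIV[symmetric] del: UNIV_Times_UNIV)

lemma form_rank1:
  "(\<Sum>X\<in>UNIV. \<Sum>X'\<in>UNIV. cnj (v X) * (c * \<Phi> X * cnj (\<Phi> X')) * v X')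
   = c * (\<Sum>X\<in>UNIV. cnj (v X) * \<Phi> X) * cnj (\<Sum>X\<in>UNIV. cnj (v X) * \<Phi> X)"
  for v \<Phi> :: "'i::finite \<Rightarrow> complex"
  by (simp add: sum_distrib_left sum_distrib_right algebra_simps)

lemma form_inner:
  "(\<Sum>y\<in>UNIV. \<Sum>y'\<in>UNIV. cnj (u y) * (c * (\<Sum>j\<in>UNIV. W j y * cnj (W j y'))) * u y')
   = c * (\<Sum>j\<in>UNIV. cnj (\<Sum>y\<in>UNIV. cnj (W j y) * u y) * (\<Sum>y\<in>UNIV. cnj (W j y) * u y))"
  for u :: "'y::finite \<Rightarrow> complex" and W :: "'j::finite \<Rightarrow> 'y \<Rightarrow> complex"
proof -
  have "(\<Sum>y\<in>UNIV. \<Sum>y'\<in>UNIV. cnj (u y) * (c * (\<Sum>j\<in>UNIV. W j y * cnj (W j y'))) * u y')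
      = (\<Sum>y\<in>UNIV. \<Sum>y'\<in>UNIV. \<Sum>j\<in>UNIV. c * ((cnj (u y) * W j y) * (cnj (W j y') * u y')))"
    by (simp add: sum_distrib_left sum_distrib_right algebra_simps)
  also have "\<dots> = (\<Sum>y\<in>UNIV. \<Sum>j\<in>UNIV. \<Sum>y'\<in>UNIV. c * ((cnj (u y) * W j y) * (cnj (W j y') * u y')))"
    by (intro sum.cong refl sum.swap)
  also have "\<dots> = (\<Sum>j\<in>UNIV. \<Sum>y\<in>UNIV. \<Sum>y'\<in>UNIV. c * ((cnj (u y) * W j y) * (cnj (W j y') * u y')))"
    by (rule sum.swap)
  also have "\<dots> = c * (\<Sum>j\<in>UNIV. cnj (\<Sum>y\<in>UNIV. cnj (W j y) * u y) * (\<Sum>y\<in>UNIV. cnj (W j y) * u y))"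
    by (simp add: sum_distrib_left sum_distrib_right algebra_simps)
  finally show ?thesis .
qed

lemma form_tensor:
  fixes v :: "('x::finite \<times> 'y::finite) \<Rightarrow> complex" and \<sigma> :: "'y qop"
  shows "(\<Sum>X\<in>UNIV. \<Sum>X'\<in>UNIV. cnj (v X) * tensor idop \<sigma> X X' * v X')
     = (\<Sum>x\<in>UNIV. \<Sum>y\<in>UNIV. \<Sum>y'\<in>UNIV. cnj (v (x, y)) * \<sigma> y y' * v (x, y'))"
proof -
  have "(\<Sum>X\<in>UNIV. \<Sum>X'\<in>UNIV. cnj (v X) * tensor idop \<sigma> X X' * v X')
     = (\<Sum>x\<in>UNIV. \<Sum>y\<in>UNIV. \<Sum>x'\<in>UNIV. \<Sum>y'\<in>UNIV. cnj (v (x, y)) * (idop x x' * \<sigma> y y') * v (x', y'))"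
    by (simp add: sum_pair tensor_def)
  also have "\<dots> = (\<Sum>x\<in>UNIV. \<Sum>y\<in>UNIV. \<Sum>x'\<in>UNIV. if x' = x then (\<Sum>y'\<in>UNIV. cnj (v (x, y)) * \<sigma> y y' * v (x, y')) else 0)"
    by (intro sum.cong refl) (auto simp: idop_def)
  also have "\<dots> = (\<Sum>x\<in>UNIV. \<Sum>y\<in>UNIV. \<Sum>y'\<in>UNIV. cnj (v (x, y)) * \<sigma> y y' * v (x, y'))"
    by simp
  finally show ?thesis .
qed

lemma ople:
  fixes \<Phi> :: "('x::finite \<times> 'y::finite) \<Rightarrow> complex" and W :: "'j::finite \<Rightarrow> 'y \<Rightarrow> complex"
  assumes c: "c > 0"
  shows "op_le (\<lambda>X X'. of_real c * \<Phi> X * cnj (\<Phi> X'))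
            (\<lambda>X X'. of_real l * tensor idop (\<lambda>y y'. of_real c * (\<Sum>j\<in>UNIV. W j y * cnj (W j y'))) X X')
     \<longleftrightarrow> (\<forall>v. (cmod (\<Sum>X\<in>UNIV. cnj (v X) * \<Phi> X))^2
               \<le> l * (\<Sum>x\<in>UNIV. \<Sum>j\<in>UNIV. (cmod (\<Sum>y\<in>UNIV. cnj (W j y) * v (x, y)))^2))"
proof -
  define \<sigma> where "\<sigma> = (\<lambda>y y'. of_real c * (\<Sum>j\<in>UNIV. W j y * cnj (W j y')))"
  have q: "(\<Sum>X\<in>UNIV. \<Sum>X'\<in>UNIV. cnj (v X) * (of_real l * tensor idop \<sigma> X X' - of_real c * \<Phi> X * cnj (\<Phi> X')) * v X')
     = of_real (c * (l * (\<Sum>x\<in>UNIV. \<Sum>j\<in>UNIV. (cmod (\<Sum>y\<in>UNIV. cnj (W j y) * v (x, y)))^2)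
                    - (cmod (\<Sum>X\<in>UNIV. cnj (v X) * \<Phi> X))^2))" for v
  proof -
    have "(\<Sum>X\<in>UNIV. \<Sum>X'\<in>UNIV. cnj (v X) * (of_real l * tensor idop \<sigma> X X' - of_real c * \<Phi> X * cnj (\<Phi> X')) * v X')
       = of_real l * (\<Sum>X\<in>UNIV. \<Sum>X'\<in>UNIV. cnj (v X) * tensor idop \<sigma> X X' * v X')
         - (\<Sum>X\<in>UNIV. \<Sum>X'\<in>UNIV. cnj (v X) * (of_real c * \<Phi> X * cnj (\<Phi> X')) * v X')"
      by (simp add: sum_distrib_left sum_subtractf algebra_simps)
    also have "(\<Sum>X\<in>UNIV. \<Sum>X'\<in>UNIV. cnj (v X) * (of_real c * \<Phi> X * cnj (\<Phi> X')) * v X')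
        = of_real c * of_real ((cmod (\<Sum>X\<in>UNIV. cnj (v X) * \<Phi> X))^2)"
      by (subst form_rank1) (simp only: complex_norm_square mult.assoc)
    also have "(\<Sum>X\<in>UNIV. \<Sum>X'\<in>UNIV. cnj (v X) * tensor idop \<sigma> X X' * v X')
        = (\<Sum>x\<in>UNIV. of_real c * (\<Sum>j\<in>UNIV. cnj (\<Sum>y\<in>UNIV. cnj (W j y) * v (x, y)) * (\<Sum>y\<in>UNIV. cnj (W j y) * v (x, y))))"
      unfolding form_tensor \<sigma>_def by (simp only: form_inner)
    also have "\<dots> = of_real c * of_real (\<Sum>x\<in>UNIV. \<Sum>j\<in>UNIV. (cmod (\<Sum>y\<in>UNIV. cnj (W j y) * v (x, y)))^2)"
    proof -
      have e: "\<And>z. cnj z * z = complex_of_real ((cmod z)^2)"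
        by (simp only: complex_norm_square mult.commute)
      show ?thesis by (simp only: e flip: of_real_sum sum_distrib_left)
    qed
    finally show ?thesis by (simp add: algebra_simps)
  qed
  show ?thesis
    unfolding op_le_def psd_def Let_def \<sigma>_def[symmetric] q
    using c by (simp add: zero_le_mult_iff)
qed

definition phiC :: "('a \<times> 'b) qop \<Rightarrow> (('a \<times> 'a) \<times> ('b \<times> 'b)) \<Rightarrow> complex" where
  "phiC C X = (case X of ((ra, a), (rb, b)) \<Rightarrow> C (a, b) (ra, rb))"

lemma choi_conj:
  fixes C :: "('a::finite \<times> 'b::finite) qop"
  shows "choi (conj_channel C) X X'
     = of_real (1 / (real (card (UNIV :: 'a set)) * real (card (UNIV :: 'b set)))) * phiC C X * cnj (phiC C X')"
proof -
  obtain ra a rb b where X: "X = ((ra, a), (rb, b))" by (metis prod.exhaust)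
  obtain ra' a' rb' b' where X': "X' = ((ra', a'), (rb', b'))" by (metis prod.exhaust)
  define k :: complex where "k = of_real (1 / (real (card (UNIV :: 'a set)) * real (card (UNIV :: 'b set))))"
  have blk: "(\<lambda>(a1, b1) (a2, b2). maxent (ra, a1) (ra', a2) * maxent (rb, b1) (rb', b2))
      = (\<lambda>w z. if w = (ra, rb) \<and> z = (ra', rb') then k else 0)"
    by (auto simp: fun_eq_iff maxent_def k_def)
  have "choi (conj_channel C) X X'
     = (\<Sum>z\<in>UNIV. (\<Sum>w\<in>UNIV. C (a, b) w * (if w = (ra, rb) \<and> z = (ra', rb') then k else 0)) * cnj (C (a', b') z))"
    unfolding X X' choi_def conj_channel_def mmult_def adj_def by (simp add: blk)
  also have "\<dots> = (\<Sum>z\<in>UNIV. if z = (ra', rb') then C (a, b) (ra, rb) * k * cnj (C (a', b') z) else 0)"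
    by (intro sum.cong refl) (auto simp: if_distrib cong: if_cong)
  also have "\<dots> = k * phiC C X * cnj (phiC C X')"
    by (simp add: X X' phiC_def)
  finally show ?thesis by (simp add: k_def)
qed

lemma cs_ineq:
  fixes z w :: "'i::finite \<Rightarrow> complex"
  shows "(cmod (\<Sum>i\<in>UNIV. cnj (z i) * w i))^2 \<le> (\<Sum>i\<in>UNIV. (cmod (z i))^2) * (\<Sum>i\<in>UNIV. (cmod (w i))^2)"
proof -
  have "cmod (\<Sum>i\<in>UNIV. cnj (z i) * w i) \<le> (\<Sum>i\<in>UNIV. cmod (cnj (z i) * w i))"
    by (rule norm_sum)
  also have "\<dots> = (\<Sum>i\<in>UNIV. \<bar>cmod (z i)\<bar> * \<bar>cmod (w i)\<bar>)"
    by (simp add: norm_mult)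
  also have "\<dots> \<le> L2_set (\<lambda>i. cmod (z i)) UNIV * L2_set (\<lambda>i. cmod (w i)) UNIV"
    by (rule L2_set_mult_ineq)
  finally have le: "cmod (\<Sum>i\<in>UNIV. cnj (z i) * w i) \<le> L2_set (\<lambda>i. cmod (z i)) UNIV * L2_set (\<lambda>i. cmod (w i)) UNIV" .
  have "(cmod (\<Sum>i\<in>UNIV. cnj (z i) * w i))^2 \<le> (L2_set (\<lambda>i. cmod (z i)) UNIV * L2_set (\<lambda>i. cmod (w i)) UNIV)^2"
    by (rule power_mono[OF le]) simp
  also have "\<dots> = (\<Sum>i\<in>UNIV. (cmod (z i))^2) * (\<Sum>i\<in>UNIV. (cmod (w i))^2)"
    by (simp add: power_mult_distrib L2_set_def sum_nonneg)
  finally show ?thesis .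
qed

lemma ip_self_real: "(\<Sum>i\<in>UNIV. (cmod (u i))^2) = Re (ip u u)"
  by (simp add: ip_self)



theorem lemma4:
  fixes e :: "'a::finite \<Rightarrow> 'a \<Rightarrow> complex"
    and U :: "'a \<Rightarrow> ('b::finite) qop"
  assumes "orthonormal_basis e"
    and "\<forall>j. unitary_op (U j)"
  shows "Sdown_inf (choi (conj_channel (ctrl_unitary e U)))
         = - log 2 (real (vector_space.dim cscale
                            (module.span cscale (range (\<lambda>j. vecop (U j))))))"
proof -
  define dA where "dA = real (card (UNIV :: 'a set))"
  define dB where "dB = real (card (UNIV :: 'b set))"
  define c where "c = 1 / (dA * dB)"
  have cpos: "c > 0" by (simp add: c_def dA_def dB_def card_gt_0_iff)
  define C where "C = ctrl_unitary e U"
  define \<rho> where "\<rho> = choi (conj_channel C)"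
  define V where "V = (\<lambda>j. vecop (U j))"
  define g where "g = (\<lambda>j (x::'a\<times>'a). e j (snd x) * cnj (e j (fst x)))"
  define \<Phi> where "\<Phi> = phiC C"
  have phi: "\<Phi> (x, y) = (\<Sum>j\<in>UNIV. g j x * V j y)" for x y
    by (cases x, cases y) (simp add: \<Phi>_def phiC_def C_def ctrl_unitary_def g_def V_def vecop_def mult.assoc)
  have rho: "\<rho> = (\<lambda>X X'. of_real c * \<Phi> X * cnj (\<Phi> X'))"
    by (simp add: fun_eq_iff \<rho>_def choi_conj \<Phi>_def c_def dA_def dB_def)
  have gorth: "ip (g i) (g k) = (if i = k then 1 else 0)" for i k
  proof -
    have "ip (g i) (g k) = (\<Sum>ra\<in>UNIV. \<Sum>a\<in>UNIV. (cnj (e i a) * e k a) * (e i ra * cnj (e k ra)))"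
      by (simp add: ip_def sum_pair g_def algebra_simps)
    also have "\<dots> = (\<Sum>a\<in>UNIV. cnj (e i a) * e k a) * (\<Sum>ra\<in>UNIV. e i ra * cnj (e k ra))"
      by (subst sum_product, rule sum.swap)
    also have "(\<Sum>ra\<in>UNIV. e i ra * cnj (e k ra)) = cnj (\<Sum>ra\<in>UNIV. cnj (e i ra) * e k ra)"
      by (simp add: mult.commute)
    also have "(\<Sum>ra\<in>UNIV. cnj (e i ra) * e k ra) = (if i = k then 1 else 0)"
      using assms(1) by (simp add: orthonormal_basis_def)
    finally show ?thesis by simp
  qed
  have ptr: "ptrace1 \<rho> = (\<lambda>y y'. of_real c * (\<Sum>j\<in>UNIV. V j y * cnj (V j y')))"
  proof (intro ext)
    fix y y'
    have "ptrace1 \<rho> y y' = of_real c * ip (\<lambda>x. \<Sum>j\<in>UNIV. V j y' * g j x) (\<lambda>x. \<Sum>j\<in>UNIV. V j y * g j x)"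
      by (simp add: ptrace1_def rho ip_def phi sum_distrib_left algebra_simps)
    also have "\<dots> = of_real c * (\<Sum>j\<in>UNIV. cnj (V j y') * V j y)"
      by (subst parseval_fam) (auto simp: gorth)
    finally show "ptrace1 \<rho> y y' = of_real c * (\<Sum>j\<in>UNIV. V j y * cnj (V j y'))"
      by (simp add: mult.commute)
  qed
  define B where "B v = (\<Sum>x\<in>UNIV. \<Sum>j\<in>UNIV. (cmod (\<Sum>y\<in>UNIV. cnj (V j y) * v (x, y)))^2)"
    for v :: "('a \<times> 'a) \<times> ('b \<times> 'b) \<Rightarrow> complex"
  define A where "A v = (\<Sum>X\<in>UNIV. cnj (v X) * \<Phi> X)"
    for v :: "('a \<times> 'a) \<times> ('b \<times> 'b) \<Rightarrow> complex"
  have set_eq: "{l. 0 \<le> l \<and> op_le \<rho> (\<lambda>X X'. of_real l * tensor idop (ptrace1 \<rho>) X X')}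
      = {l. 0 \<le> l \<and> (\<forall>v. (cmod (A v))^2 \<le> l * B v)}"
    unfolding ptr unfolding rho A_def B_def using ople[OF cpos, of \<Phi> _ V] by simp
  define r where "r y = (\<lambda>j. cnj (V j y))" for y
  obtain P where P: "finite P" "orthonormal P" "cv.span P = cv.span (range r)"
    using gram_schmidt[of "range r"] by auto
  define m where "m = card P"
  have m_dim: "m = cv.dim (cv.span (range V))"
  proof -
    have "m = cv.dim (range r)" using dim_orthonormal[OF P(2,3)] by (simp add: m_def)
    also have "\<dots> = cv.dim (range (\<lambda>y j. cnj (V j y)))" by (simp add: r_def[abs_def])
    also have "\<dots> = cv.dim (range (\<lambda>j y. V j y))"
      by (rule rank_eq[of "\<lambda>y j. V j y", symmetric])
    finally show ?thesis by simp
  qed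
  define \<chi> where "\<chi> x = (\<lambda>j. g j x)" for x
  define Z where "Z v x = (\<lambda>j. \<Sum>y\<in>UNIV. cnj (V j y) * v (x, y))"
    for v :: "('a \<times> 'a) \<times> ('b \<times> 'b) \<Rightarrow> complex" and x
  have A_eq: "A v = (\<Sum>x\<in>UNIV. ip (Z v x) (\<chi> x))" for v
  proof -
    have "A v = (\<Sum>x\<in>UNIV. \<Sum>y\<in>UNIV. \<Sum>j\<in>UNIV. cnj (v (x, y)) * (g j x * V j y))"
      by (simp add: A_def sum_pair phi sum_distrib_left)
    also have "\<dots> = (\<Sum>x\<in>UNIV. \<Sum>j\<in>UNIV. \<Sum>y\<in>UNIV. cnj (v (x, y)) * (g j x * V j y))"
      by (intro sum.cong refl sum.swap)
    also have "\<dots> = (\<Sum>x\<in>UNIV. ip (Z v x) (\<chi> x))"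
      by (simp add: ip_def Z_def \<chi>_def sum_distrib_left sum_distrib_right algebra_simps)
    finally show ?thesis .
  qed
  have Zspan: "Z v x \<in> cv.span P" for v x
  proof -
    have "Z v x = (\<Sum>y\<in>UNIV. cscale (v (x, y)) (r y))"
      by (simp add: fun_eq_iff Z_def r_def sum_fun_apply cscale_apply mult.commute)
    also have "\<dots> \<in> cv.span (range r)"
      by (intro cv.span_sum cv.span_scale cv.span_base) auto
    finally show ?thesis using P(3) by simp
  qed
  have B_eq: "B v = (\<Sum>x\<in>UNIV. \<Sum>j\<in>UNIV. (cmod (Z v x j))^2)" for v
    by (simp add: B_def Z_def)
  have Porth: "\<forall>i\<in>P. \<forall>k\<in>P. ip (id i) (id k) = (if i = k then 1 else 0)"
    using P(2) by (auto simp: orthonormal_def)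
  have pn1: "(\<Sum>j\<in>UNIV. (cmod (proj P w j))^2) = (\<Sum>p\<in>P. (cmod (ip p w))^2)" for w
  proof -
    have "complex_of_real (\<Sum>j\<in>UNIV. (cmod (proj P w j))^2) = ip (proj P w) (proj P w)"
      by (simp add: ip_self)
    also have "\<dots> = ip (\<lambda>x. \<Sum>p\<in>P. ip p w * id p x) (\<lambda>x. \<Sum>p\<in>P. ip p w * id p x)"
      by (simp add: proj_apply[abs_def])
    also have "\<dots> = (\<Sum>p\<in>P. cnj (ip p w) * ip p w)"
      by (rule parseval_fam[OF P(1) Porth])
    also have "\<dots> = complex_of_real (\<Sum>p\<in>P. (cmod (ip p w))^2)"
      unfolding of_real_sum by (intro sum.cong refl) (metis complex_norm_square mult.commute)
    finally show ?thesis by (simp only: of_real_eq_iff)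
  qed
  have pn2: "(\<Sum>x\<in>UNIV. (cmod (ip p (\<chi> x)))^2) = 1" if "p \<in> P" for p
  proof -
    have "complex_of_real (\<Sum>x\<in>UNIV. (cmod (ip p (\<chi> x)))^2) = ip (\<lambda>x. ip p (\<chi> x)) (\<lambda>x. ip p (\<chi> x))"
      by (simp add: ip_self)
    also have "\<dots> = ip (\<lambda>x. \<Sum>j\<in>UNIV. cnj (p j) * g j x) (\<lambda>x. \<Sum>j\<in>UNIV. cnj (p j) * g j x)"
      by (simp add: ip_def[of p] \<chi>_def)
    also have "\<dots> = (\<Sum>j\<in>UNIV. cnj (cnj (p j)) * cnj (p j))"
      by (rule parseval_fam) (auto simp: gorth)
    also have "\<dots> = ip p p" by (simp add: ip_def mult.commute)
    also have "\<dots> = 1" using P(2) that by (simp add: orthonormal_def)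
    finally show ?thesis by (simp only: of_real_eq_1_iff)
  qed
  have projnorm: "(\<Sum>x\<in>UNIV. \<Sum>j\<in>UNIV. (cmod (proj P (\<chi> x) j))^2) = real m"
  proof -
    have "(\<Sum>x\<in>UNIV. \<Sum>j\<in>UNIV. (cmod (proj P (\<chi> x) j))^2) = (\<Sum>x\<in>UNIV. \<Sum>p\<in>P. (cmod (ip p (\<chi> x)))^2)"
      by (simp add: pn1)
    also have "\<dots> = (\<Sum>p\<in>P. \<Sum>x\<in>UNIV. (cmod (ip p (\<chi> x)))^2)"
      by (rule sum.swap)
    also have "\<dots> = (\<Sum>p\<in>P. 1)" by (intro sum.cong refl pn2)
    finally show ?thesis by (simp add: m_def)
  qed
  have K1: "(cmod (A v))^2 \<le> real m * B v" for v
  proof -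
    have "A v = (\<Sum>x\<in>UNIV. ip (Z v x) (proj P (\<chi> x)))"
      unfolding A_eq by (intro sum.cong refl ip_span_proj[OF P(1,2) Zspan])
    also have "\<dots> = (\<Sum>xj\<in>UNIV. cnj (Z v (fst xj) (snd xj)) * proj P (\<chi> (fst xj)) (snd xj))"
      by (simp add: ip_def sum_pair)
    finally have "(cmod (A v))^2 \<le> (\<Sum>xj\<in>UNIV. (cmod (Z v (fst xj) (snd xj)))^2)
                                  * (\<Sum>xj\<in>UNIV. (cmod (proj P (\<chi> (fst xj)) (snd xj)))^2)"
      using cs_ineq[of "\<lambda>xj. Z v (fst xj) (snd xj)" "\<lambda>xj. proj P (\<chi> (fst xj)) (snd xj)"] by simp
    also have "(\<Sum>xj\<in>UNIV. (cmod (Z v (fst xj) (snd xj)))^2) = B v"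
      unfolding B_eq by (subst sum_pair) simp
    also have "(\<Sum>xj\<in>UNIV. (cmod (proj P (\<chi> (fst xj)) (snd xj)))^2) = real m"
      unfolding projnorm[symmetric] by (subst sum_pair) simp
    finally show ?thesis by (simp add: mult.commute)
  qed
  have Rng: "\<exists>cc. s = (\<lambda>j. \<Sum>y\<in>UNIV. cc y * r y j)" if "s \<in> cv.span (range r)" for s
    using that
  proof (induction rule: cv.span_induct)
    case base
    show ?case unfolding cv.subspace_def
    proof (intro conjI ballI allI)
      show "0 \<in> {s. \<exists>cc. s = (\<lambda>j. \<Sum>y\<in>UNIV. cc y * r y j)}"
        by (auto intro!: exI[of _ "\<lambda>_. 0"] simp: fun_eq_iff)
    next
      fix s1 s2 assume "s1 \<in> {s. \<exists>cc. s = (\<lambda>j. \<Sum>y\<in>UNIV. cc y * r y j)}"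
        "s2 \<in> {s. \<exists>cc. s = (\<lambda>j. \<Sum>y\<in>UNIV. cc y * r y j)}"
      then obtain c1 c2 where "s1 = (\<lambda>j. \<Sum>y\<in>UNIV. c1 y * r y j)" "s2 = (\<lambda>j. \<Sum>y\<in>UNIV. c2 y * r y j)"
        by auto
      then show "s1 + s2 \<in> {s. \<exists>cc. s = (\<lambda>j. \<Sum>y\<in>UNIV. cc y * r y j)}"
        by (auto intro!: exI[of _ "\<lambda>y. c1 y + c2 y"] simp: fun_eq_iff sum.distrib algebra_simps)
    next
      fix a s1 assume "s1 \<in> {s. \<exists>cc. s = (\<lambda>j. \<Sum>y\<in>UNIV. cc y * r y j)}"
      then obtain c1 where "s1 = (\<lambda>j. \<Sum>y\<in>UNIV. c1 y * r y j)" by auto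
      then show "cscale a s1 \<in> {s. \<exists>cc. s = (\<lambda>j. \<Sum>y\<in>UNIV. cc y * r y j)}"
        by (auto intro!: exI[of _ "\<lambda>y. a * c1 y"] simp: fun_eq_iff cscale_apply sum_distrib_left algebra_simps)
    qed
  next
    case (step s)
    then obtain y0 where "s = r y0" by auto
    then show ?case
    proof (intro exI[of _ "\<lambda>y. if y = y0 then 1 else 0"] ext)
      fix j
      have "(\<Sum>y\<in>UNIV. (if y = y0 then 1 else 0) * r y j) = (\<Sum>y\<in>UNIV. if y = y0 then r y0 j else 0)"
        by (intro sum.cong refl) auto
      then show "s j = (\<Sum>y\<in>UNIV. (if y = y0 then 1 else 0) * r y j)" using \<open>s = r y0\<close> by simp
    qed
  qed
  have "\<forall>x. \<exists>cc. proj P (\<chi> x) = (\<lambda>j. \<Sum>y\<in>UNIV. cc y * r y j)"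
    using Rng proj_in_span P(3) by metis
  then obtain F where F: "\<And>x. proj P (\<chi> x) = (\<lambda>j. \<Sum>y\<in>UNIV. F x y * r y j)" by metis
  define v0 where "v0 = (\<lambda>(x, y). F x y)"
  have Zv0: "Z v0 x = proj P (\<chi> x)" for x
    by (simp add: F Z_def v0_def r_def fun_eq_iff mult.commute)
  have Av0: "A v0 = of_real (real m)"
  proof -
    have "A v0 = (\<Sum>x\<in>UNIV. ip (proj P (\<chi> x)) (proj P (\<chi> x)))"
      unfolding A_eq Zv0 by (intro sum.cong refl ip_span_proj[OF P(1,2) proj_in_span])
    also have "\<dots> = of_real (\<Sum>x\<in>UNIV. \<Sum>j\<in>UNIV. (cmod (proj P (\<chi> x) j))^2)"
      by (simp add: ip_self of_real_sum)
    finally show ?thesis by (simp add: projnorm)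
  qed
  have Bv0: "B v0 = real m" by (simp add: B_eq Zv0 projnorm)
  have inf: "Inf {l. 0 \<le> l \<and> (\<forall>v. (cmod (A v))^2 \<le> l * B v)} = real m"
  proof (rule cInf_eq_minimum)
    show "real m \<in> {l. 0 \<le> l \<and> (\<forall>v. (cmod (A v))^2 \<le> l * B v)}" using K1 by simp
  next
    fix l assume "l \<in> {l. 0 \<le> l \<and> (\<forall>v. (cmod (A v))^2 \<le> l * B v)}"
    then have l: "0 \<le> l" "(cmod (A v0))^2 \<le> l * B v0" by auto
    show "real m \<le> l"
    proof (cases "m = 0")
      case True with l show ?thesis by simp
    next
      case False
      from l(2) have "real m * real m \<le> l * real m" by (simp add: Av0 Bv0 power2_eq_square)
      then show ?thesis using False by simp
    qed
  qed
  have "Sdown_inf (choi (conj_channel (ctrl_unitary e U))) = - log 2 (real m)"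
    unfolding C_def[symmetric] \<rho>_def[symmetric] Sdown_inf_def Dmax_def set_eq inf by simp
  then show ?thesis using m_dim by (simp add: V_def)
qed

end
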